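(* Let $\lambda>0$, $\pi/4<\theta<\pi/2$, $T_\theta=[-\pi/2+\theta,\pi/2-\theta]$, and let $\{(\underline R_n,\underline\Phi_n,\overline R_n,\overline\Phi_n)\}_{n\ge1}$ be iid with the law of $(\underline R,\underline\Phi,\overline R,\overline\Phi)$. Define the Markov chain $M_0=0$ and, for $n\ge1$, $$M_n=(M_{n-1}-\lfloor\underline R_n\cos\theta\rfloor)_+\mathbb 1\{\underline\Phi_n\in T_\theta\}+\max\{M_{n-1},\lceil\overline R_n\rceil\}\mathbb 1\{\underline\Phi_n\notin T_\theta\},$$ and $\tau^M=\inf\{n>0:M_n=0\}$. Then there are $C,c>0$ such that $\mathbb P(\tau^M\ge n)\le Ce^{-cn}$ for all $n>0$.
   Context: $\mathcal P_\lambda$: homogeneous Poisson point process of intensity $\lambda$ on $\mathbb R^2$. Polar coordinates $(r_v,\varphi_v)$, $\varphi_v\in[-\pi,\pi)$ from $e_1=(1,0)$; for $\alpha\in(0,\pi/2)$, $\mathcal C_\alpha=\{v:r_v>0,|\varphi_v|\le\alpha\}$. $(\underline R,\underline\Phi)$ are the polar coordinates of $\arg\min\{|v|:v\in\mathcal C_\theta\cap\mathcal P_\lambda\}$ and $(\overline R,\overline\Phi)$ those of $\arg\min\{|v|:v\in\mathcal C_{\pi/2-\theta}\cap\mathcal P_\lambda\}$ (same process). $x_+=\max\{x,0\}$. *)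

theory Defs
  imports "HOL-Probability.Probability"
begin

text \<open>Points of the plane are complex numbers; polar angle is Arg (in (-pi,pi]),
  which agrees with the paper's convention [-pi,pi) on all cones used here.\<close>

definition poisson_point_process :: "'a measure \<Rightarrow> ('a \<Rightarrow> complex set) \<Rightarrow> real \<Rightarrow> bool" where
  "poisson_point_process M N lam \<longleftrightarrow>
     prob_space M \<and>
     (\<forall>\<omega>\<in>space M. \<forall>K. compact K \<longrightarrow> finite (N \<omega> \<inter> K)) \<and>
     (\<forall>A. A \<in> sets borel \<and> bounded A \<longrightarrow>
        (\<lambda>\<omega>. card (N \<omega> \<inter> A)) \<in> measurable M (count_space UNIV) \<and>
        (\<forall>k::nat. measure M {\<omega>\<in>space M. card (N \<omega> \<inter> A) = k} =
            exp (- (lam * measure lborel A)) * (lam * measure lborel A) ^ k / fact k)) \<and>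
     (\<forall>(I::nat set) A. finite I \<longrightarrow> disjoint_family_on A I \<longrightarrow>
        (\<forall>i\<in>I. A i \<in> sets borel \<and> bounded (A i)) \<longrightarrow>
        prob_space.indep_vars M (\<lambda>_. count_space UNIV) (\<lambda>i \<omega>. card (N \<omega> \<inter> A i)) I)"

definition cone :: "real \<Rightarrow> complex set" where
  "cone \<alpha> = {v. v \<noteq> 0 \<and> \<bar>Arg v\<bar> \<le> \<alpha>}"

definition nearest :: "complex set \<Rightarrow> complex" where
  "nearest S = (SOME v. v \<in> S \<and> (\<forall>w\<in>S. cmod v \<le> cmod w))"

text \<open>(R_low, Phi_low, R_up, Phi_up) computed from a point configuration P.\<close>
definition polar_pair :: "real \<Rightarrow> complex set \<Rightarrow> real \<times> real \<times> real \<times> real" where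
  "polar_pair \<theta> P =
     (let u = nearest (cone \<theta> \<inter> P); w = nearest (cone (pi/2 - \<theta>) \<inter> P)
      in (cmod u, Arg u, cmod w, Arg w))"

definition Tset :: "real \<Rightarrow> real set" where
  "Tset \<theta> = {-pi/2 + \<theta> .. pi/2 - \<theta>}"

fun Mchain :: "real \<Rightarrow> (nat \<Rightarrow> real \<times> real \<times> real \<times> real) \<Rightarrow> nat \<Rightarrow> int" where
  "Mchain \<theta> X 0 = 0"
| "Mchain \<theta> X (Suc n) =
     (case X (Suc n) of (r, \<phi>, rb, \<phi>b) \<Rightarrow>
        max (Mchain \<theta> X n - \<lfloor>r * cos \<theta>\<rfloor>) 0 * of_bool (\<phi> \<in> Tset \<theta>)
        + max (Mchain \<theta> X n) \<lceil>rb\<rceil> * of_bool (\<phi> \<notin> Tset \<theta>))"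

definition tauM :: "real \<Rightarrow> (nat \<Rightarrow> real \<times> real \<times> real \<times> real) \<Rightarrow> enat" where
  "tauM \<theta> X = (INF n \<in> {n. n > 0 \<and> Mchain \<theta> X n = 0}. enat n)"

end

theory Submission
  imports Defs
begin
lemma Mchain_Suc':
  "Mchain \<theta> X (Suc n) = (if fst (snd (X (Suc n))) \<in> Tset \<theta>
     then max (Mchain \<theta> X n - \<lfloor>fst (X (Suc n)) * cos \<theta>\<rfloor>) 0
     else max (Mchain \<theta> X n) \<lceil>fst (snd (snd (X (Suc n))))\<rceil>)"
  by (cases "X (Suc n)") auto

lemma Mchain_nonneg: "0 \<le> Mchain \<theta> X n"
  by (induction n) (auto simp: Mchain_Suc' simp del: Mchain.simps(2))

definition Gset :: "real \<Rightarrow> (real \<times> real \<times> real \<times> real) set" where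
  "Gset \<theta> = {z. -pi/2 + \<theta> \<le> fst (snd z) \<and> fst (snd z) \<le> pi/2 - \<theta> \<and> 1 \<le> fst z * cos \<theta>}"

definition Yi :: "nat \<Rightarrow> real \<times> real \<times> real \<times> real \<Rightarrow> int" where
  "Yi K z = max (\<lceil>fst (snd (snd z))\<rceil> - int K) 0"

lemma Psi_step:
  assumes "0 < cos \<theta>" "0 \<le> fst (X (Suc t))"
  shows "max (Mchain \<theta> X (Suc t)) (int K) \<le> max (Mchain \<theta> X t) (int K) + Yi K (X (Suc t))"
proof -
  define d where "d = \<lfloor>fst (X (Suc t)) * cos \<theta>\<rfloor>"
  have "0 \<le> d" using assms unfolding d_def by simp
  then show ?thesis using Mchain_nonneg[of \<theta> X t]
    by (auto simp: Mchain_Suc' Yi_def simp flip: d_def simp del: Mchain.simps(2))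
qed

lemma good_step:
  assumes "X (Suc t) \<in> Gset \<theta>" "Mchain \<theta> X (Suc t) \<noteq> 0"
  shows "Mchain \<theta> X (Suc t) \<le> Mchain \<theta> X t - 1"
proof -
  have T: "fst (snd (X (Suc t))) \<in> Tset \<theta>" using assms(1) by (auto simp: Gset_def Tset_def)
  have f: "1 \<le> \<lfloor>fst (X (Suc t)) * cos \<theta>\<rfloor>" using assms(1) by (auto simp: Gset_def)
  show ?thesis using assms(2) T f
    by (auto simp: Mchain_Suc' simp del: Mchain.simps(2))
qed

lemma block_good:
  assumes G: "\<forall>i<K. X (Suc (a + i)) \<in> Gset \<theta>" and NZ: "\<forall>i<K. Mchain \<theta> X (Suc (a + i)) \<noteq> 0"
    and K: "1 \<le> K"
  shows "max (Mchain \<theta> X (a + K)) (int K) \<le> max (Mchain \<theta> X a) (int K) - 1"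
proof -
  have "\<forall>i\<le>K. Mchain \<theta> X (a + i) \<le> Mchain \<theta> X a - int i"
  proof (intro allI impI)
    fix i assume "i \<le> K" then show "Mchain \<theta> X (a + i) \<le> Mchain \<theta> X a - int i"
    proof (induction i)
      case 0 then show ?case by simp
    next
      case (Suc i)
      then have "Mchain \<theta> X (Suc (a + i)) \<le> Mchain \<theta> X (a + i) - 1"
        using G NZ by (intro good_step) auto
      then show ?case using Suc by simp
    qed
  qed
  then have A: "Mchain \<theta> X (a + K) \<le> Mchain \<theta> X a - int K" by simp
  have "Mchain \<theta> X (a + K) \<noteq> 0" using NZ K
    by (metis Suc_pred' add_Suc_right diff_less less_numeral_extra(1) order_less_le_trans zero_less_one)
  then have "1 \<le> Mchain \<theta> X (a + K)" using Mchain_nonneg[of \<theta> X "a+K"] by simp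
  then show ?thesis using A K by simp
qed

lemma sum_lessThan_add: "(\<Sum>t<a+b. f t) = (\<Sum>t<a. f t) + (\<Sum>t<b. f (a + t)) " for f :: "nat \<Rightarrow> 'b::comm_monoid_add"
  by (induction b) (auto simp: add.assoc)

lemma Psi_sum:
  assumes "0 < cos \<theta>" "\<forall>k. 0 \<le> fst (X k)"
  shows "max (Mchain \<theta> X (a + i)) (int K) \<le> max (Mchain \<theta> X a) (int K) + (\<Sum>t<i. Yi K (X (Suc (a + t))))"
proof (induction i)
  case 0 then show ?case by simp
next
  case (Suc i)
  have "max (Mchain \<theta> X (Suc (a + i))) (int K) \<le> max (Mchain \<theta> X (a + i)) (int K) + Yi K (X (Suc (a + i)))"
    using assms by (intro Psi_step) auto
  then show ?case using Suc by (simp only: sum.lessThan_Suc add_Suc_right)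
qed

lemma det_main:
  assumes c: "0 < cos \<theta>" and r: "\<forall>k. 0 \<le> fst (X k)" and K: "1 \<le> K"
    and NZ: "\<forall>t. 0 < t \<and> t \<le> m * K \<longrightarrow> Mchain \<theta> X t \<noteq> 0"
  shows "(\<Sum>j<m. of_bool (\<forall>i<K. X (Suc (j * K + i)) \<in> Gset \<theta>)) \<le> (\<Sum>t<m * K. Yi K (X (Suc t)))"
proof -
  have Yn: "0 \<le> Yi K z" for z by (simp add: Yi_def)
  have main: "j \<le> m \<Longrightarrow> max (Mchain \<theta> X (j * K)) (int K) + (\<Sum>j'<j. of_bool (\<forall>i<K. X (Suc (j' * K + i)) \<in> Gset \<theta>))
      \<le> int K + (\<Sum>t<j * K. Yi K (X (Suc t)))" for j
  proof (induction j)
    case 0 then show ?case by simp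
  next
    case (Suc j)
    let ?g = "\<forall>i<K. X (Suc (j * K + i)) \<in> Gset \<theta>"
    have PS: "max (Mchain \<theta> X (j * K + K)) (int K) \<le> max (Mchain \<theta> X (j*K)) (int K) + (\<Sum>t<K. Yi K (X (Suc (j*K + t))))"
      using Psi_sum[OF c r] by blast
    have S0: "0 \<le> (\<Sum>t<K. Yi K (X (Suc (j*K + t))))" using Yn by (simp add: sum_nonneg)
    have step: "max (Mchain \<theta> X (j * K + K)) (int K) + of_bool ?g \<le> max (Mchain \<theta> X (j*K)) (int K) + (\<Sum>t<K. Yi K (X (Suc (j*K + t))))"
    proof (cases ?g)
      case True
      have "\<forall>i<K. Mchain \<theta> X (Suc (j * K + i)) \<noteq> 0"
      proof (intro allI impI)
        fix i assume "i < K"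
        then have "Suc (j * K + i) \<le> m * K" using Suc.prems
          by (metis Suc_leI add_less_cancel_left le_trans mult_Suc mult_le_mono1 add.commute)
        then show "Mchain \<theta> X (Suc (j * K + i)) \<noteq> 0" using NZ by auto
      qed
      then have "max (Mchain \<theta> X (j * K + K)) (int K) \<le> max (Mchain \<theta> X (j*K)) (int K) - 1"
        using block_good[of K X "j*K" \<theta>] True K by auto
      moreover have "of_bool ?g = (1::int)" using True by simp
      ultimately show ?thesis using S0 by linarith
    next
      case False
      then have "of_bool ?g = (0::int)" by simp
      then show ?thesis using PS by linarith
    qed
    have "(\<Sum>t<Suc j * K. Yi K (X (Suc t))) = (\<Sum>t<j * K. Yi K (X (Suc t))) + (\<Sum>t<K. Yi K (X (Suc (j*K + t))))"
      using sum_lessThan_add[of "\<lambda>t. Yi K (X (Suc t))" "j*K" K] by (simp add: add.commute)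
    then show ?case using Suc step by (simp add: add.commute)
  qed
  have "max (Mchain \<theta> X (m * K)) (int K) + (\<Sum>j'<m. of_bool (\<forall>i<K. X (Suc (j' * K + i)) \<in> Gset \<theta>))
      \<le> int K + (\<Sum>t<m * K. Yi K (X (Suc t)))" using main by simp
  then show ?thesis by linarith
qed

lemma tau_ge:
  assumes "tauM \<theta> X \<ge> enat n" "0 < t" "t < n"
  shows "Mchain \<theta> X t \<noteq> 0"
proof
  assume "Mchain \<theta> X t = 0"
  then have "tauM \<theta> X \<le> enat t" unfolding tauM_def using assms(2) by (intro INF_lower2[of t]) auto
  then have "enat n \<le> enat t" using assms(1) by (rule order_trans[rotated])
  then show False using assms by simp
qed

lemma nearest_le:
  assumes fin: "\<forall>K. compact K \<longrightarrow> finite (P \<inter> K)" and b: "b \<in> cone \<alpha> \<inter> P"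
  shows "nearest (cone \<alpha> \<inter> P) \<in> cone \<alpha> \<inter> P \<and> cmod (nearest (cone \<alpha> \<inter> P)) \<le> cmod b"
proof -
  let ?S = "cone \<alpha> \<inter> P"
  let ?F = "?S \<inter> cball 0 (cmod b)"
  have "finite (P \<inter> cball 0 (cmod b))" using fin by auto
  then have finF: "finite ?F" by (rule finite_subset[rotated]) auto
  have bF: "b \<in> ?F" using b by auto
  define m where "m = Min (cmod ` ?F)"
  have "m \<in> cmod ` ?F" unfolding m_def using finF bF by (intro Min_in) auto
  then obtain v where v: "v \<in> ?F" "cmod v = m" by auto
  have mle: "w \<in> ?F \<Longrightarrow> m \<le> cmod w" for w unfolding m_def using finF by (intro Min_le) auto
  have "m \<le> cmod b" using mle bF by auto
  have ex: "\<exists>v. v \<in> ?S \<and> (\<forall>w\<in>?S. cmod v \<le> cmod w)"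
  proof (intro exI conjI ballI)
    show "v \<in> ?S" using v by auto
    fix w assume w: "w \<in> ?S"
    show "cmod v \<le> cmod w"
    proof (cases "cmod w \<le> cmod b")
      case True then show ?thesis using mle[of w] w v by auto
    next
      case False then show ?thesis using \<open>m \<le> cmod b\<close> v by auto
    qed
  qed
  have "nearest ?S \<in> ?S \<and> (\<forall>w\<in>?S. cmod (nearest ?S) \<le> cmod w)"
    unfolding nearest_def by (rule someI_ex[OF ex])
  then show ?thesis using b by auto
qed

lemma arg_small:
  assumes "0 < Re z" "\<bar>Im z\<bar> \<le> t * Re z" "0 < \<alpha>" "\<alpha> < pi/2" "t \<le> tan \<alpha>"
  shows "\<bar>Arg z\<bar> \<le> \<alpha>"
proof -
  have A: "Arg z = arctan (Im z / Re z)" using assms(1) by (rule arg_conv_arctan)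
  have "\<bar>Im z / Re z\<bar> = \<bar>Im z\<bar> / Re z" using assms(1) by simp
  also have "\<dots> \<le> t" using assms(1,2) by (simp add: divide_le_eq)
  finally have q: "\<bar>Im z / Re z\<bar> \<le> tan \<alpha>" using assms by linarith
  have ta: "arctan (tan \<alpha>) = \<alpha>" using assms by (intro arctan_tan) auto
  have q1: "Im z / Re z \<le> tan \<alpha>" "- tan \<alpha> \<le> Im z / Re z" using q abs_le_iff[of "Im z / Re z" "tan \<alpha>"] by linarith+
  have "arctan (Im z / Re z) \<le> arctan (tan \<alpha>)" using q1 by (simp only: arctan_le_iff)
  moreover have "arctan (- tan \<alpha>) \<le> arctan (Im z / Re z)" using q1 by (simp only: arctan_le_iff)
  ultimately show ?thesis using ta A by (simp add: arctan_minus)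
qed

lemma box_measure:
  assumes "a \<le> b" "c \<le> d"
  shows "measure lborel (cbox (Complex a c) (Complex b d)) = (b - a) * (d - c)"
proof -
  have "emeasure lborel (cbox (Complex a c) (Complex b d)) = ennreal ((b - a) * (d - c))"
    using assms by (simp add: emeasure_lborel_cbox_eq Basis_complex_def)
  then show ?thesis by (simp add: measure_def assms)
qed

lemma box_mem: "z \<in> cbox (Complex a c) (Complex b d) \<longleftrightarrow> a \<le> Re z \<and> Re z \<le> b \<and> c \<le> Im z \<and> Im z \<le> d"
  by (simp add: cbox_complex_eq)

lemma ppp_prob_space: "poisson_point_process M N lam \<Longrightarrow> prob_space M"
  by (simp add: poisson_point_process_def)

lemma ppp_zero:
  assumes P: "poisson_point_process M N lam" and A: "A \<in> sets borel" "bounded A"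
  shows "{\<omega>\<in>space M. card (N \<omega> \<inter> A) = 0} \<in> sets M"
    and "measure M {\<omega>\<in>space M. card (N \<omega> \<inter> A) = 0} = exp (- (lam * measure lborel A))"
proof -
  have m: "(\<lambda>\<omega>. card (N \<omega> \<inter> A)) \<in> measurable M (count_space UNIV)"
    and p: "\<And>k. measure M {\<omega>\<in>space M. card (N \<omega> \<inter> A) = k} =
            exp (- (lam * measure lborel A)) * (lam * measure lborel A) ^ k / fact k"
    using P A unfolding poisson_point_process_def by auto
  have "(\<lambda>\<omega>. card (N \<omega> \<inter> A)) -` {0} \<inter> space M \<in> sets M" by (rule measurable_sets[OF m]) auto
  moreover have "(\<lambda>\<omega>. card (N \<omega> \<inter> A)) -` {0} \<inter> space M = {\<omega>\<in>space M. card (N \<omega> \<inter> A) = 0}" by auto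
  ultimately show "{\<omega>\<in>space M. card (N \<omega> \<inter> A) = 0} \<in> sets M" by simp
  show "measure M {\<omega>\<in>space M. card (N \<omega> \<inter> A) = 0} = exp (- (lam * measure lborel A))"
    using p[of 0] by simp
qed

lemma ppp_tail:
  assumes P: "poisson_point_process M N lam" and th: "pi/4 < \<theta>" "\<theta> < pi/2" and x: "0 < x"
  shows "measure M {\<omega>\<in>space M. x < fst (snd (snd (polar_pair \<theta> (N \<omega>))))}
           \<le> exp (- (lam * min 1 (tan (pi/2 - \<theta>)) / 8 * x\<^sup>2))"
proof -
  interpret prob_space M using P by (rule ppp_prob_space)
  define \<alpha> where "\<alpha> = pi/2 - \<theta>"
  define u where "u = min 1 (tan \<alpha>)"
  have a0: "0 < \<alpha>" "\<alpha> < pi/2" using th by (auto simp: \<alpha>_def)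
  have "0 < tan \<alpha>" using a0 by (simp add: tan_gt_zero)
  then have u0: "0 < u" "u \<le> 1" "u \<le> tan \<alpha>" by (auto simp: u_def)
  define B where "B = cbox (Complex (x/4) (-(x*u/4))) (Complex (x/2) (x*u/4))"
  have mB: "measure lborel B = x\<^sup>2 * u / 8" unfolding B_def using x u0
    by (subst box_measure) (auto simp: power2_eq_square field_simps)
  have Bb: "B \<in> sets borel" "bounded B" unfolding B_def by auto
  have fin: "\<omega> \<in> space M \<Longrightarrow> \<forall>K. compact K \<longrightarrow> finite (N \<omega> \<inter> K)" for \<omega>
    using P unfolding poisson_point_process_def by auto
  have Bsub: "z \<in> B \<Longrightarrow> z \<in> cone \<alpha> \<and> cmod z \<le> x" for z
  proof -
    assume "z \<in> B"
    then have z: "x/4 \<le> Re z" "Re z \<le> x/2" "-(x*u/4) \<le> Im z" "Im z \<le> x*u/4"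
      unfolding B_def box_mem by auto
    have re: "0 < Re z" using z x by linarith
    have "\<bar>Im z\<bar> \<le> x*u/4" using z by linarith
    also have "\<dots> \<le> u * Re z" using z u0 by (simp add: mult_left_mono)
    finally have "\<bar>Arg z\<bar> \<le> \<alpha>" using re a0 u0 by (intro arg_small[of z u]) auto
    moreover have "z \<noteq> 0" using re by auto
    moreover have "cmod z \<le> x"
    proof -
      have "cmod z \<le> \<bar>Re z\<bar> + \<bar>Im z\<bar>" by (rule cmod_le)
      also have "\<dots> \<le> x/2 + x*u/4" using z re by linarith
      also have "\<dots> \<le> x"
      proof -
        have "x * u \<le> x * 1" using u0(2) x by (intro mult_left_mono) auto
        then show ?thesis using x by linarith
      qed
      finally show ?thesis .
    qed
    ultimately show ?thesis by (simp add: cone_def)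
  qed
  have sub: "{\<omega>\<in>space M. x < fst (snd (snd (polar_pair \<theta> (N \<omega>))))} \<subseteq> {\<omega>\<in>space M. card (N \<omega> \<inter> B) = 0}"
  proof safe
    fix \<omega> assume \<omega>: "\<omega> \<in> space M" and gt: "x < fst (snd (snd (polar_pair \<theta> (N \<omega>))))"
    show "card (N \<omega> \<inter> B) = 0"
    proof (rule ccontr)
      assume "card (N \<omega> \<inter> B) \<noteq> 0"
      then obtain b where b: "b \<in> N \<omega>" "b \<in> B" by (metis card.empty disjoint_iff)
      then have "b \<in> cone \<alpha> \<inter> N \<omega>" using Bsub by auto
      from nearest_le[OF fin[OF \<omega>] this]
      have "cmod (nearest (cone \<alpha> \<inter> N \<omega>)) \<le> x" using Bsub b by force
      then show False using gt by (simp add: polar_pair_def Let_def \<alpha>_def)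
    qed
  qed
  have "measure M {\<omega>\<in>space M. x < fst (snd (snd (polar_pair \<theta> (N \<omega>))))} \<le> measure M {\<omega>\<in>space M. card (N \<omega> \<inter> B) = 0}"
    by (rule finite_measure_mono[OF sub ppp_zero(1)[OF P Bb]])
  also have "\<dots> = exp (- (lam * measure lborel B))" by (rule ppp_zero(2)[OF P Bb])
  also have "\<dots> = exp (- (lam * min 1 (tan (pi/2 - \<theta>)) / 8 * x\<^sup>2))"
    unfolding mB u_def \<alpha>_def by (simp add: field_simps)
  finally show ?thesis .
qed

definition wq :: "real \<Rightarrow> real" where "wq \<theta> = min 1 (tan (pi/2 - \<theta>) / cos \<theta>)"
definition Bq :: "real \<Rightarrow> complex set" where
  "Bq \<theta> = cbox (Complex (1 / cos \<theta>) 0) (Complex (1 / cos \<theta> + 1) (wq \<theta>))"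
definition Dq :: "real \<Rightarrow> complex set" where "Dq \<theta> = cball 0 (1 / cos \<theta> + 2) - Bq \<theta>"
definition qG :: "real \<Rightarrow> real \<Rightarrow> real" where
  "qG lam \<theta> = (1 - exp (- (lam * wq \<theta>))) * exp (- (lam * measure lborel (Dq \<theta>)))"

lemma qG_pos:
  assumes "0 < lam" "pi/4 < \<theta>" "\<theta> < pi/2"
  shows "0 < qG lam \<theta>"
proof -
  have c: "0 < cos \<theta>" using assms by (intro cos_gt_zero_pi) auto
  have "0 < tan (pi/2 - \<theta>)" using assms by (intro tan_gt_zero) auto
  then have "0 < wq \<theta>" using c by (simp add: wq_def)
  then have "exp (- (lam * wq \<theta>)) < 1" using assms by simp
  then show ?thesis unfolding qG_def by simp
qed

lemma ppp_G:
  assumes P: "poisson_point_process M N lam" and th: "pi/4 < \<theta>" "\<theta> < pi/2"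
    and meas: "(\<lambda>\<omega>. polar_pair \<theta> (N \<omega>)) \<in> measurable M borel" and Gb: "Gset \<theta> \<in> sets borel"
  shows "qG lam \<theta> \<le> measure M {\<omega>\<in>space M. polar_pair \<theta> (N \<omega>) \<in> Gset \<theta>}"
proof -
  interpret prob_space M using P by (rule ppp_prob_space)
  define \<rho> where "\<rho> = 1 / cos \<theta>"
  define \<alpha> where "\<alpha> = pi/2 - \<theta>"
  define w where "w = wq \<theta>"
  define B where "B = Bq \<theta>"
  define D where "D = Dq \<theta>"
  have c: "0 < cos \<theta>" using th by (intro cos_gt_zero_pi) auto
  have r0: "0 < \<rho>" using c by (simp add: \<rho>_def)
  have a0: "0 < \<alpha>" "\<alpha> < pi/2" "\<alpha> < \<theta>" using th by (auto simp: \<alpha>_def)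
  have ta: "0 < tan \<alpha>" using a0 by (simp add: tan_gt_zero)
  have w: "0 < w" "w \<le> 1" "w \<le> \<rho> * tan \<alpha>" using ta c
    by (auto simp: w_def wq_def \<rho>_def \<alpha>_def)
  have Bdef: "B = cbox (Complex \<rho> 0) (Complex (\<rho> + 1) w)" by (simp add: B_def Bq_def \<rho>_def w_def)
  have Ddef: "D = cball 0 (\<rho> + 2) - B" by (simp add: D_def Dq_def \<rho>_def B_def)
  have mB: "measure lborel B = w" unfolding Bdef using w by (subst box_measure) auto
  have Bb: "B \<in> sets borel" "bounded B" unfolding Bdef by auto
  have Db: "D \<in> sets borel" "bounded D" unfolding Ddef using Bb by auto
  have fin: "\<omega> \<in> space M \<Longrightarrow> \<forall>K. compact K \<longrightarrow> finite (N \<omega> \<inter> K)" for \<omega>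
    using P unfolding poisson_point_process_def by auto
  have Bprop: "z \<in> B \<Longrightarrow> z \<in> cone \<theta> \<and> \<bar>Arg z\<bar> \<le> \<alpha> \<and> \<rho> \<le> cmod z \<and> cmod z \<le> \<rho> + 2" for z
  proof -
    assume "z \<in> B"
    then have z: "\<rho> \<le> Re z" "Re z \<le> \<rho> + 1" "0 \<le> Im z" "Im z \<le> w"
      unfolding Bdef box_mem by auto
    have re: "0 < Re z" using z r0 by linarith
    have "\<bar>Im z\<bar> \<le> \<rho> * tan \<alpha>" using z w by linarith
    also have "\<dots> \<le> tan \<alpha> * Re z" using z ta by (simp add: mult.commute mult_left_mono)
    finally have A: "\<bar>Arg z\<bar> \<le> \<alpha>" using re a0 by (intro arg_small[of z "tan \<alpha>"]) auto
    have "z \<noteq> 0" using re by auto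
    then have "z \<in> cone \<theta>" using A a0 by (simp add: cone_def)
    moreover have "\<rho> \<le> cmod z" using z abs_Re_le_cmod[of z] by linarith
    moreover have "cmod z \<le> \<rho> + 2"
    proof -
      have "cmod z \<le> \<bar>Re z\<bar> + \<bar>Im z\<bar>" by (rule cmod_le)
      also have "\<dots> \<le> \<rho> + 2" using z re w by linarith
      finally show ?thesis .
    qed
    ultimately show ?thesis using A by blast
  qed
  define X where "X = (\<lambda>i \<omega>. card (N \<omega> \<inter> (if i = (0::nat) then B else D)))"
  have ind: "indep_vars (\<lambda>_. count_space UNIV) X {0,1}"
  proof -
    have "disjoint_family_on (\<lambda>i::nat. if i = 0 then B else D) {0,1}"
      by (auto simp: disjoint_family_on_def Ddef)
    then show ?thesis using P Bb Db unfolding poisson_point_process_def X_def by auto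
  qed
  define S where "S = (\<lambda>i::nat. if i = 0 then UNIV - {0::nat} else {0})"
  have "prob (\<Inter>i\<in>{0,1}. X i -` S i \<inter> space M) = (\<Prod>i\<in>{0,1}. prob (X i -` S i \<inter> space M))"
    by (rule indep_varsD[OF ind]) auto
  then have pr: "prob ((X 0 -` S 0 \<inter> space M) \<inter> (X 1 -` S 1 \<inter> space M)) =
      prob (X 0 -` S 0 \<inter> space M) * prob (X 1 -` S 1 \<inter> space M)" by simp
  have e0: "X 0 -` S 0 \<inter> space M = space M - {\<omega>\<in>space M. card (N \<omega> \<inter> B) = 0}"
    by (auto simp: X_def S_def)
  have e1: "X 1 -` S 1 \<inter> space M = {\<omega>\<in>space M. card (N \<omega> \<inter> D) = 0}"
    by (auto simp: X_def S_def)
  have p0: "prob (X 0 -` S 0 \<inter> space M) = 1 - exp (- (lam * w))"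
    unfolding e0 by (simp add: prob_compl ppp_zero[OF P Bb] mB)
  have p1: "prob (X 1 -` S 1 \<inter> space M) = exp (- (lam * measure lborel D))"
    unfolding e1 by (simp add: ppp_zero[OF P Db])
  have Gm: "{\<omega>\<in>space M. polar_pair \<theta> (N \<omega>) \<in> Gset \<theta>} \<in> sets M"
  proof -
    have "(\<lambda>\<omega>. polar_pair \<theta> (N \<omega>)) -` Gset \<theta> \<inter> space M \<in> sets M"
      by (rule measurable_sets[OF meas Gb])
    moreover have "(\<lambda>\<omega>. polar_pair \<theta> (N \<omega>)) -` Gset \<theta> \<inter> space M = {\<omega>\<in>space M. polar_pair \<theta> (N \<omega>) \<in> Gset \<theta>}"
      by auto
    ultimately show ?thesis by simp
  qed
  have sub: "(X 0 -` S 0 \<inter> space M) \<inter> (X 1 -` S 1 \<inter> space M) \<subseteq> {\<omega>\<in>space M. polar_pair \<theta> (N \<omega>) \<in> Gset \<theta>}"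
  proof safe
    fix \<omega> assume \<omega>: "\<omega> \<in> space M" and cB: "X 0 \<omega> \<in> S 0" and cD: "X 1 \<omega> \<in> S 1"
    have "card (N \<omega> \<inter> B) \<noteq> 0" using cB by (simp add: X_def S_def)
    then obtain b where b: "b \<in> N \<omega>" "b \<in> B" by (metis card.empty disjoint_iff)
    have "finite (N \<omega> \<inter> cball 0 (\<rho> + 2))" using fin[OF \<omega>] by auto
    then have "finite (N \<omega> \<inter> D)" by (rule finite_subset[rotated]) (auto simp: Ddef)
    moreover have "card (N \<omega> \<inter> D) = 0" using cD by (simp add: X_def S_def)
    ultimately have ND: "N \<omega> \<inter> D = {}" by simp
    have "b \<in> cone \<theta> \<inter> N \<omega>" using Bprop b by auto
    from nearest_le[OF fin[OF \<omega>] this]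
    have u: "nearest (cone \<theta> \<inter> N \<omega>) \<in> cone \<theta> \<inter> N \<omega>" "cmod (nearest (cone \<theta> \<inter> N \<omega>)) \<le> cmod b"
      by auto
    let ?u = "nearest (cone \<theta> \<inter> N \<omega>)"
    have "cmod ?u \<le> \<rho> + 2" using u Bprop[OF b(2)] by linarith
    then have "?u \<in> B" using u ND by (auto simp: Ddef)
    then have U: "\<bar>Arg ?u\<bar> \<le> \<alpha>" "\<rho> \<le> cmod ?u" using Bprop by auto
    have "1 \<le> cmod ?u * cos \<theta>" using U(2) c by (simp add: \<rho>_def field_simps)
    then show "polar_pair \<theta> (N \<omega>) \<in> Gset \<theta>" using U(1)
      by (auto simp: polar_pair_def Let_def Gset_def \<alpha>_def abs_le_iff)
  qed
  have "qG lam \<theta> = prob ((X 0 -` S 0 \<inter> space M) \<inter> (X 1 -` S 1 \<inter> space M))"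
    unfolding pr p0 p1 qG_def w_def D_def ..
  also have "\<dots> \<le> measure M {\<omega>\<in>space M. polar_pair \<theta> (N \<omega>) \<in> Gset \<theta>}"
    by (rule finite_measure_mono[OF sub Gm])
  finally show ?thesis .
qed

lemma choose_K:
  fixes b q d :: real
  assumes b: "0 < b" and q: "0 < q" "q \<le> 1" and d: "0 < d"
  shows "\<exists>K::nat. 1 \<le> K \<and> 1 \<le> b * K \<and> real K * exp (-b * (real K)^2) \<le> d * q ^ K"
proof -
  define A where "A = 1 - ln q"
  define B where "B = \<bar>ln d\<bar>"
  have A1: "1 \<le> A" using q by (simp add: A_def)
  have B0: "0 \<le> B" by (simp add: B_def)
  define K where "K = nat \<lceil>(A + B) / b\<rceil> + 1"
  have K1: "1 \<le> K" by (simp add: K_def)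
  have "(A + B) / b \<le> real K" unfolding K_def using real_nat_ceiling_ge[of "(A+B)/b"] by simp
  then have bK: "A + B \<le> b * K" using b by (simp add: divide_le_eq mult.commute)
  then have bK1: "1 \<le> b * K" using A1 B0 by linarith
  have "(A + B) * K \<le> (b * K) * K" using bK by (intro mult_right_mono) auto
  moreover have "B \<le> B * K" using B0 K1 by (simp add: mult_le_cancel_left1)
  ultimately have "A * K + B \<le> b * (real K)^2" by (simp add: power2_eq_square algebra_simps)
  then have ex: "real K - b * (real K)^2 \<le> K * ln q + ln d" unfolding A_def B_def by (simp add: algebra_simps)
  have "real K \<le> exp (real K)" using exp_ge_add_one_self[of "real K"] by linarith
  then have "real K * exp (-b * (real K)^2) \<le> exp (real K) * exp (-b * (real K)^2)" by (intro mult_right_mono) auto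
  also have "\<dots> = exp (real K - b * (real K)^2)" by (simp add: exp_add[symmetric])
  also have "\<dots> \<le> exp (K * ln q + ln d)" using ex by simp
  also have "\<dots> = d * q ^ K" using q d by (simp add: exp_add exp_of_nat_mult)
  finally show ?thesis using K1 bK1 by blast
qed

lemma (in prob_space) exp_Y_bound:
  fixes f :: "'a \<Rightarrow> real"
  assumes fm: "f \<in> borel_measurable M" and K: "1 \<le> K" and b: "0 < b" "1 \<le> b * K"
    and tail: "\<And>x. 0 < x \<Longrightarrow> prob {\<omega>\<in>space M. x < f \<omega>} \<le> exp (- b * x\<^sup>2)"
  shows "(\<integral>\<^sup>+\<omega>. ennreal (exp (real_of_int (max (\<lceil>f \<omega>\<rceil> - int K) 0))) \<partial>M) \<le> ennreal (1 + 6 * exp (- b * (real K)\<^sup>2))"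
proof -
  define S where "S = (\<lambda>j::nat. {\<omega>\<in>space M. real K + real j < f \<omega>})"
  have Sm: "S j \<in> sets M" for j unfolding S_def using fm by measurable
  define g where "g = (\<lambda>j::nat. exp 1 * exp (- b * (real K)\<^sup>2) * (1/2) ^ j)"
  have pw: "ennreal (exp (real_of_int (max (\<lceil>f \<omega>\<rceil> - int K) 0))) \<le>
      1 + (\<Sum>j. ennreal (exp (real j + 1)) * indicator (S j) \<omega>)" if \<omega>: "\<omega> \<in> space M" for \<omega>
  proof (cases "\<lceil>f \<omega>\<rceil> - int K \<le> 0")
    case True then show ?thesis by simp
  next
    case False
    define n where "n = nat (\<lceil>f \<omega>\<rceil> - int K - 1)"
    have Y: "max (\<lceil>f \<omega>\<rceil> - int K) 0 = int n + 1" using False by (simp add: n_def)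
    have "real K + real n < f \<omega>"
    proof (rule ccontr)
      assume "\<not> ?thesis"
      then have "\<lceil>f \<omega>\<rceil> \<le> int K + int n" by (simp add: ceiling_le_iff)
      then show False using Y by linarith
    qed
    then have "\<omega> \<in> S n" using \<omega> by (simp add: S_def)
    then have "ennreal (exp (real n + 1)) * indicator (S n) \<omega> \<le> (\<Sum>j. ennreal (exp (real j + 1)) * indicator (S j) \<omega>)"
      using sum_le_suminf[OF summableI, of "{n}" "\<lambda>j. ennreal (exp (real j + 1)) * indicator (S j) \<omega>"] by simp
    moreover have "ennreal (exp (real_of_int (max (\<lceil>f \<omega>\<rceil> - int K) 0))) = ennreal (exp (real n + 1)) * indicator (S n) \<omega>"
      using Y \<open>\<omega> \<in> S n\<close> by simp
    ultimately show ?thesis by (metis add.commute add_increasing2 zero_le)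
  qed
  have "(\<integral>\<^sup>+\<omega>. ennreal (exp (real_of_int (max (\<lceil>f \<omega>\<rceil> - int K) 0))) \<partial>M)
      \<le> (\<integral>\<^sup>+\<omega>. 1 + (\<Sum>j. ennreal (exp (real j + 1)) * indicator (S j) \<omega>) \<partial>M)"
    by (rule nn_integral_mono) (rule pw)
  also have "\<dots> = 1 + (\<Sum>j. ennreal (exp (real j + 1)) * emeasure M (S j))"
    using Sm by (simp add: nn_integral_add nn_integral_suminf nn_integral_cmult_indicator emeasure_space_1)
  also have "\<dots> \<le> 1 + (\<Sum>j. ennreal (g j))"
  proof -
    have "ennreal (exp (real j + 1)) * emeasure M (S j) \<le> ennreal (g j)" for j
    proof -
      have em: "emeasure M (S j) = ennreal (prob (S j))" using Sm by (simp add: emeasure_eq_measure)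
      have pr: "prob (S j) \<le> exp (- b * (real K + real j)\<^sup>2)"
        unfolding S_def using K by (intro tail) auto
      have ge: "exp (real j + 1) * exp (- b * (real K + real j)\<^sup>2) \<le> g j"
      proof -
        have "b * (2 * K * j) \<ge> 2 * j" using mult_left_mono[OF b(2), of "2 * real j"] by (simp add: algebra_simps)
        moreover have "0 \<le> b * (real j)^2" using b by simp
        moreover have "real j * ln 2 \<le> real j * 1" using ln_2_less_1 by (intro mult_left_mono) auto
        moreover have e: "b * (real K + real j)^2 = b*(real K)^2 + b*(2*K*j) + b * (real j)^2"
          by (simp add: power2_eq_square algebra_simps)
        ultimately have "real j + 1 - b * (real K + real j)\<^sup>2 \<le> 1 - b * (real K)\<^sup>2 - real j * ln 2"
          by linarith
        then have "exp (real j + 1 - b * (real K + real j)\<^sup>2) \<le> exp (1 - b * (real K)\<^sup>2 - real j * ln 2)" by simp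
        moreover have "exp (1 - b * (real K)\<^sup>2 - real j * ln 2) = g j"
        proof -
          have "exp (real j * ln 2) = 2 ^ j" by (simp add: exp_of_nat_mult)
          then have h: "exp (-(real j * ln 2)) = (1/2)^j" by (simp add: exp_minus power_one_over inverse_eq_divide)
          have "exp (1 - b * (real K)\<^sup>2 - real j * ln 2) = exp (1 + (- b * (real K)\<^sup>2) + (-(real j * ln 2)))"
            by simp
          also have "\<dots> = exp 1 * exp (- b * (real K)\<^sup>2) * exp (-(real j * ln 2))" by (simp only: exp_add)
          finally show ?thesis using h by (simp add: g_def)
        qed
        moreover have "exp (real j + 1) * exp (- b * (real K + real j)\<^sup>2) = exp (real j + 1 - b * (real K + real j)\<^sup>2)"
          by (simp add: exp_diff exp_minus field_simps)
        ultimately show ?thesis by simp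
      qed
      have "exp (real j + 1) * prob (S j) \<le> g j"
        using pr ge by (meson exp_gt_zero less_imp_le mult_left_mono order_trans)
      then show ?thesis using em by (simp add: ennreal_mult''[symmetric] ennreal_leI)
    qed
    then show ?thesis by (intro add_left_mono suminf_le summableI) auto
  qed
  also have "(\<Sum>j. ennreal (g j)) = ennreal (exp 1 * exp (- b * (real K)\<^sup>2) * 2)"
  proof -
    have "g sums (exp 1 * exp (- b * (real K)\<^sup>2) * 2)"
      unfolding g_def using geometric_sums[of "1/2::real"] by (intro sums_mult) auto
    then have "(\<lambda>j. ennreal (g j)) sums ennreal (exp 1 * exp (- b * (real K)\<^sup>2) * 2)"
      by (subst sums_ennreal) (auto simp: g_def)
    then show ?thesis by (rule sums_unique[symmetric])
  qed
  also have "1 + ennreal (exp 1 * exp (- b * (real K)\<^sup>2) * 2) \<le> ennreal (1 + 6 * exp (- b * (real K)\<^sup>2))"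
  proof -
    have "exp 1 * exp (- b * (real K)\<^sup>2) * 2 \<le> 6 * exp (- b * (real K)\<^sup>2)" using exp_le by simp
    then have h: "1 + exp 1 * exp (- b * (real K)\<^sup>2) * 2 \<le> 1 + 6 * exp (- b * (real K)\<^sup>2)" by simp
    have "1 + ennreal (exp 1 * exp (- b * (real K)\<^sup>2) * 2) = ennreal (1 + exp 1 * exp (- b * (real K)\<^sup>2) * 2)"
      by (subst ennreal_plus) auto
    also have "\<dots> \<le> ennreal (1 + 6 * exp (- b * (real K)\<^sup>2))" by (rule ennreal_leI[OF h])
    finally show ?thesis .
  qed
  finally show ?thesis .
qed

lemma prod_mono_ennreal: "(\<And>i. i \<in> A \<Longrightarrow> f i \<le> g i) \<Longrightarrow> prod f A \<le> (prod g A :: ennreal)"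
  by (induction A rule: infinite_finite_induct) (auto intro!: mult_mono)

lemma prod_indicator_lt: "(\<Prod>i<(K::nat). indicator S (f i) :: real) = of_bool (\<forall>i<K. f i \<in> S)"
  by (induction K) (auto simp: less_Suc_eq)

lemma block_div: "i < K \<Longrightarrow> (j * K + i) div K = (j::nat)"
proof -
  assume "i < K"
  then have "K \<noteq> 0" by simp
  then have "(i + j * K) div K = i div K + j" by simp
  then show ?thesis using \<open>i < K\<close> by (simp add: add.commute)
qed

lemma (in prob_space) block_bound:
  fixes Z :: "nat \<Rightarrow> 'a \<Rightarrow> real \<times> real \<times> real \<times> real"
  assumes ind: "indep_vars (\<lambda>_. borel) Z {1..}" and Gb: "G \<in> sets borel" and K: "1 \<le> K"
    and pG: "\<And>k. 1 \<le> k \<Longrightarrow> q \<le> prob {\<omega>\<in>space M. Z k \<omega> \<in> G}" and q: "0 \<le> q" "q \<le> 1"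
  shows "measure M {\<omega>\<in>space M. (\<Sum>j<m. \<Prod>i<K. indicator G (Z (Suc (j*K+i)) \<omega>)) \<le> s}
           \<le> exp s * (1 - (1 - exp (-1)) * q ^ K) ^ m"
proof -
  define c0 :: real where "c0 = 1 - exp (-1)"
  have c0: "0 \<le> c0" "c0 \<le> 1" by (auto simp: c0_def)
  have rv: "1 \<le> k \<Longrightarrow> Z k \<in> borel_measurable M" for k using ind unfolding indep_vars_def by auto
  define Ind where "Ind = (\<lambda>j \<omega>. (\<Prod>i<K. indicator G (Z (Suc (j*K+i)) \<omega>) :: real))"
  have indm: "(\<lambda>\<omega>. indicator G (Z k \<omega>) :: real) \<in> borel_measurable M" if "1 \<le> k" for k
    by (rule measurable_compose[OF rv[OF that] borel_measurable_indicator[OF Gb]])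
  have Indm: "Ind j \<in> borel_measurable M" for j
    unfolding Ind_def by (intro borel_measurable_prod indm) auto
  define fA where "fA = (\<lambda>\<omega>. \<Sum>j<m. Ind j \<omega>)"
  have fAm: "fA \<in> borel_measurable M" unfolding fA_def by (intro borel_measurable_sum Indm)
  define Kset where "Kset = (\<lambda>j. (\<lambda>i. Suc (j*K+i)) ` {..<K})"
  have Ksub: "Kset j \<subseteq> {1..}" for j by (auto simp: Kset_def)
  have Kdisj: "disjoint_family_on Kset {..<m}"
  proof (auto simp: disjoint_family_on_def Kset_def)
    fix j j' i i' assume "j \<noteq> j'" "i < K" "i' < K" "j * K + i = j' * K + i'"
    then show False using block_div[of i K j] block_div[of i' K j'] by metis
  qed
  have indR: "indep_vars (\<lambda>j. Pi\<^sub>M (Kset j) (\<lambda>_. borel)) (\<lambda>j \<omega>. restrict (\<lambda>i. Z i \<omega>) (Kset j)) {..<m}"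
    by (rule indep_vars_restrict[OF ind Ksub Kdisj])
  define Yf where "Yf = (\<lambda>j (g :: nat \<Rightarrow> real \<times> real \<times> real \<times> real).
     ennreal (exp (- (\<Prod>i<K. indicator G (g (Suc (j*K+i))) :: real))))"
  have Yfm: "Yf j \<in> borel_measurable (Pi\<^sub>M (Kset j) (\<lambda>_. borel))" for j
  proof -
    have pm: "(\<lambda>g. \<Prod>i<K. indicator G (g (Suc (j*K+i))) :: real) \<in> borel_measurable (Pi\<^sub>M (Kset j) (\<lambda>_. borel))"
    proof (intro borel_measurable_prod)
      fix i assume "i \<in> {..<K}"
      then have mem: "Suc (j*K+i) \<in> Kset j" by (auto simp: Kset_def)
      show "(\<lambda>g. indicator G (g (Suc (j*K+i))) :: real) \<in> borel_measurable (Pi\<^sub>M (Kset j) (\<lambda>_. borel))"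
        by (rule measurable_compose[OF measurable_component_singleton[OF mem] borel_measurable_indicator[OF Gb]])
    qed
    show ?thesis unfolding Yf_def by (intro measurable_compose[OF pm]) measurable
  qed
  have indE: "indep_vars (\<lambda>_. borel) (\<lambda>j \<omega>. ennreal (exp (- Ind j \<omega>))) {..<m}"
  proof -
    have "indep_vars (\<lambda>_. borel) (\<lambda>j \<omega>. Yf j (restrict (\<lambda>i. Z i \<omega>) (Kset j))) {..<m}"
      by (rule indep_vars_compose2[OF indR Yfm])
    moreover have "(\<lambda>\<omega>. Yf j (restrict (\<lambda>i. Z i \<omega>) (Kset j))) = (\<lambda>\<omega>. ennreal (exp (- Ind j \<omega>)))" for j
      unfolding Yf_def Ind_def by (auto simp: Kset_def intro!: prod.cong)
    ultimately show ?thesis by simp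
  qed
  define A where "A = (\<lambda>j. {\<omega>\<in>space M. \<forall>i<K. Z (Suc (j*K+i)) \<omega> \<in> G})"
  have Am: "A j \<in> sets M" for j
  proof -
    have "A j = {\<omega>\<in>space M. Ind j \<omega> = 1}" by (auto simp: A_def Ind_def prod_indicator_lt)
    also have "\<dots> \<in> sets M" using Indm[of j] by measurable
    finally show ?thesis .
  qed
  have pA: "q ^ K \<le> prob (A j)" for j
  proof -
    have "0 \<in> {..<K}" using K by simp
    then have Kne: "{..<K} \<noteq> {}" by blast
    have Aeq: "A j = (\<Inter>i\<in>Kset j. Z i -` G \<inter> space M)" using Kne by (auto simp: A_def Kset_def)
    have "prob (\<Inter>i\<in>Kset j. Z i -` G \<inter> space M) = (\<Prod>i\<in>Kset j. prob (Z i -` G \<inter> space M))"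
      by (rule indep_varsD[OF ind]) (use Kne Ksub Gb in \<open>auto simp: Kset_def\<close>)
    then have "prob (A j) = (\<Prod>i\<in>Kset j. prob (Z i -` G \<inter> space M))" using Aeq by simp
    also have "\<dots> = (\<Prod>i<K. prob (Z (Suc (j*K+i)) -` G \<inter> space M))"
      unfolding Kset_def by (subst prod.reindex) (auto simp: inj_on_def)
    also have "\<dots> \<ge> (\<Prod>i<K. q)"
    proof (rule prod_mono)
      fix i assume "i \<in> {..<K}"
      have "Z (Suc (j*K+i)) -` G \<inter> space M = {\<omega>\<in>space M. Z (Suc (j*K+i)) \<omega> \<in> G}" by auto
      then show "0 \<le> q \<and> q \<le> prob (Z (Suc (j*K+i)) -` G \<inter> space M)" using pG[of "Suc (j*K+i)"] q by simp
    qed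
    finally show ?thesis by simp
  qed
  have intE: "(\<integral>\<^sup>+\<omega>. ennreal (exp (- Ind j \<omega>)) \<partial>M) = ennreal (1 - c0 * prob (A j))" for j
  proof -
    have "(\<integral>\<^sup>+\<omega>. ennreal (exp (- Ind j \<omega>)) \<partial>M) = (\<integral>\<^sup>+\<omega>. ennreal (1 - c0 * indicator (A j) \<omega>) \<partial>M)"
      by (intro nn_integral_cong) (auto simp: Ind_def A_def prod_indicator_lt c0_def indicator_def)
    also have "\<dots> = ennreal (\<integral>\<omega>. 1 - c0 * indicator (A j) \<omega> \<partial>M)"
    proof (rule nn_integral_eq_integral)
      show "integrable M (\<lambda>\<omega>. 1 - c0 * indicator (A j) \<omega>)"
        using Am[of j] by (intro Bochner_Integration.integrable_diff integrable_mult_right integrable_real_indicator) (auto simp: emeasure_eq_measure)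
      show "AE x in M. 0 \<le> 1 - c0 * indicator (A j) x" using c0 by (auto simp: indicator_def)
    qed
    also have "(\<integral>\<omega>. 1 - c0 * indicator (A j) \<omega> \<partial>M) = 1 - c0 * prob (A j)"
    proof -
      have i1: "integrable M (\<lambda>\<omega>. c0 * indicator (A j) \<omega> :: real)"
        using Am[of j] by (intro integrable_mult_right integrable_real_indicator) (auto simp: emeasure_eq_measure)
      have "(\<integral>\<omega>. 1 - c0 * indicator (A j) \<omega> \<partial>M) = (\<integral>\<omega>. 1 \<partial>M) - (\<integral>\<omega>. c0 * indicator (A j) \<omega> \<partial>M)"
        by (rule Bochner_Integration.integral_diff[OF _ i1]) simp
      also have "\<dots> = 1 - c0 * prob (A j)"
        using Am[of j] by (simp add: prob_space)
      finally show ?thesis .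
    qed
    finally show ?thesis .
  qed
  have "emeasure M {\<omega>\<in>space M. fA \<omega> \<le> s} \<le>
      ennreal (exp (1 * s)) * (\<integral>\<^sup>+\<omega>. ennreal (exp (- 1 * fA \<omega>)) * indicator (space M) \<omega> \<partial>M)"
    by (rule Chernoff_ineq_nn_integral_le[OF _ _ fAm]) auto
  also have "(\<integral>\<^sup>+\<omega>. ennreal (exp (- 1 * fA \<omega>)) * indicator (space M) \<omega> \<partial>M)
      = (\<integral>\<^sup>+\<omega>. (\<Prod>j<m. ennreal (exp (- Ind j \<omega>))) \<partial>M)"
  proof (intro nn_integral_cong)
    fix \<omega> assume "\<omega> \<in> space M"
    have "exp (- 1 * fA \<omega>) = (\<Prod>j<m. exp (- Ind j \<omega>))"
      by (simp add: fA_def exp_sum sum_negf[symmetric])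
    then show "ennreal (exp (- 1 * fA \<omega>)) * indicator (space M) \<omega> = (\<Prod>j<m. ennreal (exp (- Ind j \<omega>)))"
      using \<open>\<omega> \<in> space M\<close> by (simp add: prod_ennreal)
  qed
  also have "\<dots> = (\<Prod>j<m. \<integral>\<^sup>+\<omega>. ennreal (exp (- Ind j \<omega>)) \<partial>M)"
    by (rule indep_vars_nn_integral[OF _ indE]) auto
  also have "\<dots> = ennreal (\<Prod>j<m. 1 - c0 * prob (A j))"
    unfolding intE using c0 by (intro prod_ennreal) (simp add: mult_le_one)
  also have "(\<Prod>j<m. 1 - c0 * prob (A j)) \<le> (\<Prod>j<m. 1 - c0 * q ^ K)"
  proof (rule prod_mono)
    fix j assume "j \<in> {..<m}"
    show "0 \<le> 1 - c0 * prob (A j) \<and> 1 - c0 * prob (A j) \<le> 1 - c0 * q ^ K"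
      using pA[of j] c0 by (auto simp: mult_le_one intro: mult_left_mono)
  qed
  finally have F: "emeasure M {\<omega>\<in>space M. fA \<omega> \<le> s} \<le> ennreal (exp s) * ennreal ((1 - c0 * q ^ K) ^ m)"
    by (simp add: ennreal_leI mult_left_mono)
  have "c0 * q ^ K \<le> 1" using c0 q by (intro mult_le_one) (auto intro: power_le_one)
  then have nn: "0 \<le> (1 - c0 * q ^ K) ^ m" by simp
  have "emeasure M {\<omega>\<in>space M. fA \<omega> \<le> s} \<le> ennreal (exp s * (1 - c0 * q ^ K) ^ m)"
    using F ennreal_mult[OF exp_ge_zero nn, of s] by simp
  moreover have "0 \<le> exp s * (1 - c0 * q ^ K) ^ m" using nn by simp
  ultimately have "measure M {\<omega>\<in>space M. fA \<omega> \<le> s} \<le> exp s * (1 - c0 * q ^ K) ^ m"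
    by (subst (asm) emeasure_eq_measure) simp
  then show ?thesis
    unfolding fA_def Ind_def c0_def .
qed

lemma meas_c1[measurable]: "(\<lambda>z::real\<times>real\<times>real\<times>real. fst z) \<in> borel_measurable borel"
  by (intro borel_measurable_continuous_onI continuous_intros)
lemma meas_c2[measurable]: "(\<lambda>z::real\<times>real\<times>real\<times>real. fst (snd z)) \<in> borel_measurable borel"
  by (intro borel_measurable_continuous_onI continuous_intros)
lemma meas_c3[measurable]: "(\<lambda>z::real\<times>real\<times>real\<times>real. fst (snd (snd z))) \<in> borel_measurable borel"
  by (intro borel_measurable_continuous_onI continuous_intros)

lemma Yr_meas: "(\<lambda>z. real_of_int (Yi K z)) \<in> borel_measurable (borel :: (real \<times> real \<times> real \<times> real) measure)"
proof -
  have "(\<lambda>x::real. real_of_int (max (\<lceil>x\<rceil> - int K) 0)) \<in> borel_measurable borel" by measurable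
  from measurable_compose[OF meas_c3 this] show ?thesis by (simp add: Yi_def)
qed

lemma Gset_borel: "Gset \<theta> \<in> sets borel"
proof -
  have "Gset \<theta> = {z\<in>space borel. -pi/2 + \<theta> \<le> fst (snd z) \<and> fst (snd z) \<le> pi/2 - \<theta> \<and> 1 \<le> fst z * cos \<theta>}"
    by (auto simp: Gset_def)
  also have "\<dots> \<in> sets borel" by measurable
  finally show ?thesis .
qed

lemma (in prob_space) Y_bound:
  fixes Z :: "nat \<Rightarrow> 'a \<Rightarrow> real \<times> real \<times> real \<times> real"
  assumes ind: "indep_vars (\<lambda>_. borel) Z {1..}" and K: "1 \<le> K" and b: "0 < b" "1 \<le> b * K"
    and tail: "\<And>k x. 1 \<le> k \<Longrightarrow> 0 < x \<Longrightarrow> prob {\<omega>\<in>space M. x < fst (snd (snd (Z k \<omega>)))} \<le> exp (- b * x\<^sup>2)"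
  shows "measure M {\<omega>\<in>space M. s \<le> (\<Sum>t<n. real_of_int (Yi K (Z (Suc t) \<omega>)))}
           \<le> exp (- s) * (1 + 6 * exp (- b * (real K)\<^sup>2)) ^ n"
proof -
  define \<epsilon> where "\<epsilon> = 6 * exp (- b * (real K)\<^sup>2)"
  have rv: "1 \<le> k \<Longrightarrow> Z k \<in> borel_measurable M" for k using ind unfolding indep_vars_def by auto
  define Yr where "Yr = (\<lambda>z. real_of_int (Yi K z))"
  have Yrm: "Yr \<in> borel_measurable borel" unfolding Yr_def by (rule Yr_meas)
  have Ym: "(\<lambda>\<omega>. Yr (Z (Suc t) \<omega>)) \<in> borel_measurable M" for t
    by (rule measurable_compose[OF rv Yrm]) simp
  define fY where "fY = (\<lambda>\<omega>. \<Sum>t<n. Yr (Z (Suc t) \<omega>))"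
  have fYm: "fY \<in> borel_measurable M" unfolding fY_def by (intro borel_measurable_sum Ym)
  have indR: "indep_vars (\<lambda>t. Pi\<^sub>M {Suc t} (\<lambda>_. borel)) (\<lambda>t \<omega>. restrict (\<lambda>i. Z i \<omega>) {Suc t}) UNIV"
    by (rule indep_vars_restrict[OF ind]) (simp_all add: disjoint_family_on_def)
  define Yg where "Yg = (\<lambda>t (g :: nat \<Rightarrow> real \<times> real \<times> real \<times> real). ennreal (exp (Yr (g (Suc t)))))"
  have Ygm: "Yg t \<in> borel_measurable (Pi\<^sub>M {Suc t} (\<lambda>_. borel))" for t
  proof -
    have "(\<lambda>g. Yr (g (Suc t))) \<in> borel_measurable (Pi\<^sub>M {Suc t} (\<lambda>_. borel))"
      by (rule measurable_compose[OF measurable_component_singleton[of "Suc t" "{Suc t}"] Yrm]) simp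
    then show ?thesis unfolding Yg_def by measurable
  qed
  have indE: "indep_vars (\<lambda>_. borel) (\<lambda>t \<omega>. ennreal (exp (Yr (Z (Suc t) \<omega>)))) {..<n}"
  proof -
    have "indep_vars (\<lambda>_. borel) (\<lambda>t \<omega>. Yg t (restrict (\<lambda>i. Z i \<omega>) {Suc t})) UNIV"
      by (rule indep_vars_compose2[OF indR Ygm])
    moreover have "(\<lambda>t \<omega>. Yg t (restrict (\<lambda>i. Z i \<omega>) {Suc t})) = (\<lambda>t \<omega>. ennreal (exp (Yr (Z (Suc t) \<omega>))))"
      by (intro ext) (simp add: Yg_def)
    ultimately have "indep_vars (\<lambda>_. borel) (\<lambda>t \<omega>. ennreal (exp (Yr (Z (Suc t) \<omega>)))) UNIV"
      by simp
    then show ?thesis by (rule indep_vars_subset) simp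
  qed
  have each: "(\<integral>\<^sup>+\<omega>. ennreal (exp (Yr (Z (Suc t) \<omega>))) \<partial>M) \<le> ennreal (1 + \<epsilon>)" for t
  proof -
    have fm: "(\<lambda>\<omega>. fst (snd (snd (Z (Suc t) \<omega>)))) \<in> borel_measurable M"
      by (rule measurable_compose[OF rv meas_c3]) simp
    show ?thesis
      using exp_Y_bound[OF fm K b tail[of "Suc t"]] by (simp add: Yr_def Yi_def \<epsilon>_def)
  qed
  have "emeasure M {\<omega>\<in>space M. fY \<omega> \<ge> s} \<le>
      ennreal (exp (- 1 * s)) * (\<integral>\<^sup>+\<omega>. ennreal (exp (1 * fY \<omega>)) * indicator (space M) \<omega> \<partial>M)"
  proof (rule Chernoff_ineq_nn_integral_ge)
    show "(\<lambda>x. fY x * indicator (space M) x) \<in> borel_measurable M"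
      using fYm by measurable
  qed auto
  also have "(\<integral>\<^sup>+\<omega>. ennreal (exp (1 * fY \<omega>)) * indicator (space M) \<omega> \<partial>M)
      = (\<integral>\<^sup>+\<omega>. (\<Prod>t<n. ennreal (exp (Yr (Z (Suc t) \<omega>)))) \<partial>M)"
  proof (intro nn_integral_cong)
    fix \<omega> assume "\<omega> \<in> space M"
    have "exp (1 * fY \<omega>) = (\<Prod>t<n. exp (Yr (Z (Suc t) \<omega>)))"
      by (simp add: fY_def exp_sum)
    then show "ennreal (exp (1 * fY \<omega>)) * indicator (space M) \<omega> = (\<Prod>t<n. ennreal (exp (Yr (Z (Suc t) \<omega>))))"
      using \<open>\<omega> \<in> space M\<close> by (simp add: prod_ennreal)
  qed
  also have "\<dots> = (\<Prod>t<n. \<integral>\<^sup>+\<omega>. ennreal (exp (Yr (Z (Suc t) \<omega>))) \<partial>M)"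
    by (rule indep_vars_nn_integral[OF _ indE]) auto
  also have "\<dots> \<le> (\<Prod>t<n. ennreal (1 + \<epsilon>))"
    by (rule prod_mono_ennreal) (rule each)
  also have "\<dots> = ennreal ((1 + \<epsilon>) ^ n)"
    by (subst prod_ennreal) (auto simp: \<epsilon>_def)
  finally have F: "emeasure M {\<omega>\<in>space M. fY \<omega> \<ge> s} \<le> ennreal (exp (- s)) * ennreal ((1 + \<epsilon>) ^ n)"
    by (simp add: ennreal_leI mult_left_mono)
  have nn: "0 \<le> (1 + \<epsilon>) ^ n" by (simp add: \<epsilon>_def)
  have "emeasure M {\<omega>\<in>space M. fY \<omega> \<ge> s} \<le> ennreal (exp (- s) * (1 + \<epsilon>) ^ n)"
    using F ennreal_mult[OF exp_ge_zero nn, of "- s"] by simp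
  moreover have "0 \<le> exp (- s) * (1 + \<epsilon>) ^ n" using nn by simp
  ultimately have "measure M {\<omega>\<in>space M. s \<le> fY \<omega>} \<le> exp (- s) * (1 + \<epsilon>) ^ n"
    by (subst (asm) emeasure_eq_measure) simp
  then show ?thesis unfolding fY_def Yr_def \<epsilon>_def .
qed

theorem lemma4p3:
  fixes M :: "'a measure" and N :: "nat \<Rightarrow> 'a \<Rightarrow> complex set" and lam \<theta> :: real
  assumes "lam > 0" and "pi/4 < \<theta>" and "\<theta> < pi/2"
    and "\<And>n. n \<ge> 1 \<Longrightarrow> poisson_point_process M (N n) lam"
    and "prob_space.indep_vars M (\<lambda>_. borel) (\<lambda>n \<omega>. polar_pair \<theta> (N n \<omega>)) {1..}"
  shows "\<exists>C>0. \<exists>c>0. \<forall>n::nat. n > 0 \<longrightarrow>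
           measure M {\<omega>\<in>space M. tauM \<theta> (\<lambda>k. polar_pair \<theta> (N k \<omega>)) \<ge> enat n}
             \<le> C * exp (- c * real n)"
proof -
  have P1: "poisson_point_process M (N 1) lam" using assms(4) by simp
  interpret prob_space M using P1 by (rule ppp_prob_space)
  define Z where "Z = (\<lambda>k \<omega>. polar_pair \<theta> (N k \<omega>))"
  have ind: "indep_vars (\<lambda>_. borel) Z {1..}" using assms(5) unfolding Z_def .
  have rv: "1 \<le> k \<Longrightarrow> Z k \<in> borel_measurable M" for k using ind unfolding indep_vars_def by auto
  have c: "0 < cos \<theta>" using assms(2,3) by (intro cos_gt_zero_pi) auto
  have Gb: "Gset \<theta> \<in> sets borel" by (rule Gset_borel)
  define q where "q = qG lam \<theta>"
  have q0: "0 < q" unfolding q_def using assms(1,2,3) by (rule qG_pos)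
  have pG: "q \<le> prob {\<omega>\<in>space M. Z k \<omega> \<in> Gset \<theta>}" if "1 \<le> k" for k
    using ppp_G[OF assms(4)[OF that] assms(2,3) _ Gb] rv[OF that] by (simp add: Z_def q_def)
  have "prob {\<omega>\<in>space M. Z 1 \<omega> \<in> Gset \<theta>} \<le> 1" by (rule prob_le_1)
  then have q1: "q \<le> 1" using pG[of 1] by linarith
  define b where "b = lam * min 1 (tan (pi/2 - \<theta>)) / 8"
  have "0 < tan (pi/2 - \<theta>)" using assms(2,3) by (intro tan_gt_zero) auto
  then have b0: "0 < b" using assms(1) by (simp add: b_def)
  have pT: "prob {\<omega>\<in>space M. x < fst (snd (snd (Z k \<omega>)))} \<le> exp (- b * x\<^sup>2)" if "1 \<le> k" "0 < x" for k x
    using ppp_tail[OF assms(4)[OF that(1)] assms(2,3) that(2)] by (simp add: Z_def b_def)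
  define c0 :: real where "c0 = 1 - exp (-1)"
  have c00: "0 < c0" "c0 \<le> 1" by (auto simp: c0_def)
  obtain K where K: "1 \<le> K" "1 \<le> b * K" "real K * exp (-b * (real K)^2) \<le> c0/24 * q^K"
    using choose_K[OF b0 q0 q1, of "c0/24"] c00 by auto
  define u where "u = c0 * q ^ K"
  have qK: "q ^ K \<le> 1" using q0 q1 by (simp add: power_le_one)
  have u0: "0 < u" "u \<le> 1" using c00 q0 qK mult_le_one[of c0 "q ^ K"] by (auto simp: u_def)
  define \<epsilon> where "\<epsilon> = 6 * exp (- b * (real K)\<^sup>2)"
  have \<epsilon>0: "0 \<le> \<epsilon>" by (simp add: \<epsilon>_def)
  have \<epsilon>K: "\<epsilon> * K \<le> u / 4" using K(3) unfolding \<epsilon>_def u_def by (simp add: field_simps)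
  show ?thesis
  proof (intro exI conjI allI impI)
    show "0 < 2 * exp (u/2)" by simp
    show "0 < u / (4 * real K)" using u0 K by simp
    fix n :: nat assume n: "0 < n"
    define m where "m = (n - 1) div K"
    define s where "s = u * m / 2"
    define fA where "fA = (\<lambda>\<omega>. \<Sum>j<m. \<Prod>i<K. indicator (Gset \<theta>) (Z (Suc (j*K+i)) \<omega>) :: real)"
    define fY where "fY = (\<lambda>\<omega>. \<Sum>t<m*K. real_of_int (Yi K (Z (Suc t) \<omega>)))"
    have EA: "measure M {\<omega>\<in>space M. fA \<omega> \<le> s} \<le> exp s * (1 - c0 * q^K)^m"
      unfolding fA_def c0_def by (rule block_bound[OF ind Gb K(1) pG]) (use q0 q1 in auto)
    have EY: "measure M {\<omega>\<in>space M. s \<le> fY \<omega>} \<le> exp (-s) * (1 + \<epsilon>)^(m*K)"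
      unfolding fY_def \<epsilon>_def by (rule Y_bound[OF ind K(1) b0 K(2) pT])
    have mK: "m * K \<le> n - 1" unfolding m_def by simp
    have indm: "(\<lambda>\<omega>. indicator (Gset \<theta>) (Z (Suc k) \<omega>) :: real) \<in> borel_measurable M" for k
      by (rule measurable_compose[OF rv borel_measurable_indicator[OF Gb]]) simp
    have fAm: "fA \<in> borel_measurable M" unfolding fA_def
      by (intro borel_measurable_sum borel_measurable_prod indm)
    have Ym: "(\<lambda>\<omega>. real_of_int (Yi K (Z (Suc t) \<omega>))) \<in> borel_measurable M" for t
      by (rule measurable_compose[OF rv Yr_meas]) simp
    have fYm: "fY \<in> borel_measurable M" unfolding fY_def by (intro borel_measurable_sum Ym)
    have Am: "{\<omega>\<in>space M. fA \<omega> \<le> s} \<in> sets M" using fAm by measurable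
    have Bm: "{\<omega>\<in>space M. s \<le> fY \<omega>} \<in> sets M" using fYm by measurable
    have incl: "{\<omega>\<in>space M. tauM \<theta> (\<lambda>k. polar_pair \<theta> (N k \<omega>)) \<ge> enat n}
        \<subseteq> {\<omega>\<in>space M. fA \<omega> \<le> s} \<union> {\<omega>\<in>space M. s \<le> fY \<omega>}"
    proof
      fix \<omega> assume "\<omega> \<in> {\<omega>\<in>space M. tauM \<theta> (\<lambda>k. polar_pair \<theta> (N k \<omega>)) \<ge> enat n}"
      then have \<omega>: "\<omega> \<in> space M" and tau: "enat n \<le> tauM \<theta> (\<lambda>k. Z k \<omega>)" by (auto simp: Z_def)
      let ?X = "\<lambda>k. Z k \<omega>"
      have r: "\<forall>k. 0 \<le> fst (?X k)" by (simp add: Z_def polar_pair_def Let_def)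
      have NZ: "\<forall>t. 0 < t \<and> t \<le> m*K \<longrightarrow> Mchain \<theta> ?X t \<noteq> 0"
      proof (intro allI impI)
        fix t assume "0 < t \<and> t \<le> m * K"
        then have "0 < t" "t < n" using mK n by auto
        then show "Mchain \<theta> ?X t \<noteq> 0" using tau_ge[OF tau] by simp
      qed
      have D: "(\<Sum>j<m. of_bool (\<forall>i<K. ?X (Suc (j*K+i)) \<in> Gset \<theta>)) \<le> (\<Sum>t<m*K. Yi K (?X (Suc t)))"
        by (rule det_main[OF c r K(1) NZ])
      have "fA \<omega> = real_of_int (\<Sum>j<m. of_bool (\<forall>i<K. ?X (Suc (j*K+i)) \<in> Gset \<theta>))"
        by (simp add: fA_def prod_indicator_lt)
      moreover have "fY \<omega> = real_of_int (\<Sum>t<m*K. Yi K (?X (Suc t)))" by (simp add: fY_def)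
      ultimately have "fA \<omega> \<le> fY \<omega>" using D by (simp only: of_int_le_iff)
      then show "\<omega> \<in> {\<omega>\<in>space M. fA \<omega> \<le> s} \<union> {\<omega>\<in>space M. s \<le> fY \<omega>}"
        using \<omega> by (cases "fA \<omega> \<le> s") auto
    qed
    have bound: "exp s * (1 - c0 * q^K)^m + exp (-s) * (1 + \<epsilon>)^(m*K) \<le> 2 * exp (u/2) * exp (- (u / (4 * real K)) * real n)"
    proof -
      have "1 - u \<le> exp (- u)" using exp_ge_add_one_self[of "-u"] by simp
      then have "(1 - u)^m \<le> exp (- u)^m" using u0 by (intro power_mono) auto
      also have "\<dots> = exp (- (u * m))" by (simp add: exp_of_nat_mult[symmetric] mult.commute)
      finally have T1: "exp s * (1 - c0 * q^K)^m \<le> exp (- (u * m / 4))"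
      proof -
        assume h: "(1 - u)^m \<le> exp (- (u * m))"
        have "exp s * (1 - c0 * q^K)^m \<le> exp s * exp (- (u * m))"
          using h by (simp add: u_def)
        also have "\<dots> = exp (- (u * m / 2))" by (simp add: s_def exp_add[symmetric])
        also have "\<dots> \<le> exp (- (u * m / 4))" using u0 by simp
        finally show ?thesis .
      qed
      have "1 + \<epsilon> \<le> exp \<epsilon>" using exp_ge_add_one_self[of \<epsilon>] by simp
      then have "(1 + \<epsilon>)^(m*K) \<le> exp \<epsilon> ^ (m*K)" using \<epsilon>0 by (intro power_mono) auto
      also have "\<dots> = exp (real (m*K) * \<epsilon>)" by (rule exp_of_nat_mult[symmetric])
      also have "\<dots> \<le> exp (u * m / 4)"
      proof -
        have "real (m*K) * \<epsilon> = m * (\<epsilon> * K)" by simp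
        also have "\<dots> \<le> m * (u/4)" using \<epsilon>K by (intro mult_left_mono) auto
        also have "\<dots> = u * m / 4" by simp
        finally show ?thesis by (simp only: exp_le_cancel_iff)
      qed
      finally have T2: "exp (-s) * (1 + \<epsilon>)^(m*K) \<le> exp (- (u * m / 4))"
      proof -
        assume h: "(1 + \<epsilon>)^(m*K) \<le> exp (u * m / 4)"
        have "exp (-s) * (1 + \<epsilon>)^(m*K) \<le> exp (-s) * exp (u * m / 4)" using h by simp
        also have "\<dots> = exp (- (u * m / 4))" by (simp add: s_def exp_add[symmetric])
        finally show ?thesis .
      qed
      have "n < (m + 2) * K"
      proof -
        define r where "r = (n - 1) mod K"
        have "n - 1 = m * K + r" unfolding m_def r_def by simp
        then have e: "n = m * K + r + 1" using n by simp
        have "r < K" using K(1) unfolding r_def by simp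
        then have "m * K + r + 1 < m * K + 2 * K" using K(1) by simp
        moreover have "(m + 2) * K = m * K + 2 * K" by (simp add: algebra_simps)
        ultimately show ?thesis using e by simp
      qed
      then have "real n < (real m + 2) * real K" by (metis of_nat_add of_nat_less_iff of_nat_mult numeral_2_eq_2 of_nat_numeral)
      moreover have "0 < real K" using K(1) by simp
      ultimately have "real n / real K < real m + 2" by (simp add: divide_less_eq)
      then have mb: "real n / real K - 2 \<le> real m" by linarith
      have "- (u * m / 4) \<le> u / 2 + (- (u / (4 * real K)) * real n)"
      proof -
        have "u * (real n / real K - 2) \<le> u * m" using mb u0 by (intro mult_left_mono) auto
        then show ?thesis using K(1) by (simp add: field_simps)
      qed
      then have "exp (- (u * m / 4)) \<le> exp (u/2) * exp (- (u / (4 * real K)) * real n)"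
        by (simp add: exp_add[symmetric])
      then show ?thesis using T1 T2 by linarith
    qed
    show "measure M {\<omega>\<in>space M. tauM \<theta> (\<lambda>k. polar_pair \<theta> (N k \<omega>)) \<ge> enat n}
        \<le> 2 * exp (u/2) * exp (- (u / (4 * real K)) * real n)"
    proof (cases "{\<omega>\<in>space M. tauM \<theta> (\<lambda>k. polar_pair \<theta> (N k \<omega>)) \<ge> enat n} \<in> sets M")
      case True
      have "measure M {\<omega>\<in>space M. tauM \<theta> (\<lambda>k. polar_pair \<theta> (N k \<omega>)) \<ge> enat n}
          \<le> measure M ({\<omega>\<in>space M. fA \<omega> \<le> s} \<union> {\<omega>\<in>space M. s \<le> fY \<omega>})"
        using incl Am Bm by (intro finite_measure_mono) auto
      also have "\<dots> \<le> measure M {\<omega>\<in>space M. fA \<omega> \<le> s} + measure M {\<omega>\<in>space M. s \<le> fY \<omega>}"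
        by (rule measure_Un_le[OF Am Bm])
      also have "\<dots> \<le> exp s * (1 - c0 * q^K)^m + exp (-s) * (1 + \<epsilon>)^(m*K)" using EA EY by linarith
      finally show ?thesis using bound by linarith
    next
      case False
      then show ?thesis by (simp add: measure_notin_sets)
    qed
  qed
qed

end
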